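(* Let $\mathfrak g$ be an admissible non-reductive Lie algebra with $\mathfrak z(\mathfrak g)\subseteq[\mathfrak g,\mathfrak g]$, and let $\mathfrak r$ be the radical of $\mathfrak g$. If $h\in\mathfrak g$ is an Euler element of $\mathfrak g$, then $[h,\mathfrak r]=\{0\}$.
   Context: A finite-dimensional real Lie algebra $\mathfrak g$ is admissible if it contains a pointed (no affine lines), generating (spanning), closed convex subset invariant under $\operatorname{Inn}(\mathfrak g)=\langle e^{\operatorname{ad}\mathfrak g}\rangle$. An Euler element of $\mathfrak g$ is an element $h$ such that $\operatorname{ad}h$ is diagonalizable with spectrum contained in $\{-1,0,1\}$. *)

theory Defs
  imports "HOL-Analysis.Analysis"
begin

definition lie_algebra :: "('a::euclidean_space \<Rightarrow> 'a \<Rightarrow> 'a) \<Rightarrow> bool" where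
  "lie_algebra br \<longleftrightarrow> bilinear br \<and> (\<forall>x. br x x = 0) \<and>
     (\<forall>x y z. br x (br y z) + br y (br z x) + br z (br x y) = 0)"

definition exp_ad :: "('a::euclidean_space \<Rightarrow> 'a \<Rightarrow> 'a) \<Rightarrow> 'a \<Rightarrow> 'a \<Rightarrow> 'a" where
  "exp_ad br x v = (\<Sum>n. (1 / fact n) *\<^sub>R (((br x) ^^ n) v))"

inductive_set Inn :: "('a::euclidean_space \<Rightarrow> 'a \<Rightarrow> 'a) \<Rightarrow> ('a \<Rightarrow> 'a) set"
  for br where
  Inn_id: "id \<in> Inn br"
| Inn_gen: "g \<in> Inn br \<Longrightarrow> exp_ad br x \<circ> g \<in> Inn br"
| Inn_inv: "g \<in> Inn br \<Longrightarrow> inv (exp_ad br x) \<circ> g \<in> Inn br"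

definition pointed :: "'a::real_vector set \<Rightarrow> bool" where
  "pointed C \<longleftrightarrow> \<not> (\<exists>x v. v \<noteq> 0 \<and> (\<forall>t::real. x + t *\<^sub>R v \<in> C))"

definition admissible :: "('a::euclidean_space \<Rightarrow> 'a \<Rightarrow> 'a) \<Rightarrow> bool" where
  "admissible br \<longleftrightarrow> (\<exists>C. pointed C \<and> span C = UNIV \<and> closed C \<and> convex C \<and>
      (\<forall>g\<in>Inn br. g ` C \<subseteq> C))"

definition lie_ideal :: "('a::euclidean_space \<Rightarrow> 'a \<Rightarrow> 'a) \<Rightarrow> 'a set \<Rightarrow> bool" where
  "lie_ideal br I \<longleftrightarrow> subspace I \<and> (\<forall>x y. y \<in> I \<longrightarrow> br x y \<in> I)"

fun derived_series :: "('a::euclidean_space \<Rightarrow> 'a \<Rightarrow> 'a) \<Rightarrow> 'a set \<Rightarrow> nat \<Rightarrow> 'a set" where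
  "derived_series br I 0 = I"
| "derived_series br I (Suc n) =
     span {br a b | a b. a \<in> derived_series br I n \<and> b \<in> derived_series br I n}"

definition solvable :: "('a::euclidean_space \<Rightarrow> 'a \<Rightarrow> 'a) \<Rightarrow> 'a set \<Rightarrow> bool" where
  "solvable br I \<longleftrightarrow> (\<exists>n. derived_series br I n = {0})"

definition radical :: "('a::euclidean_space \<Rightarrow> 'a \<Rightarrow> 'a) \<Rightarrow> 'a set" where
  "radical br = \<Union> {I. lie_ideal br I \<and> solvable br I}"

definition center :: "('a::euclidean_space \<Rightarrow> 'a \<Rightarrow> 'a) \<Rightarrow> 'a set" where
  "center br = {z. \<forall>x. br z x = 0}"

definition derived_algebra :: "('a::euclidean_space \<Rightarrow> 'a \<Rightarrow> 'a) \<Rightarrow> 'a set" where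
  "derived_algebra br = span {br x y | x y. True}"

definition reductive :: "('a::euclidean_space \<Rightarrow> 'a \<Rightarrow> 'a) \<Rightarrow> bool" where
  "reductive br \<longleftrightarrow> radical br = center br"

definition diagonalizable :: "('a::euclidean_space \<Rightarrow> 'a) \<Rightarrow> bool" where
  "diagonalizable f \<longleftrightarrow> span {v. \<exists>c::real. f v = c *\<^sub>R v} = UNIV"

definition spectrum_op :: "('a::euclidean_space \<Rightarrow> 'a) \<Rightarrow> real set" where
  "spectrum_op f = {c. \<exists>v. v \<noteq> 0 \<and> f v = c *\<^sub>R v}"

definition euler_element :: "('a::euclidean_space \<Rightarrow> 'a \<Rightarrow> 'a) \<Rightarrow> 'a \<Rightarrow> bool" where
  "euler_element br h \<longleftrightarrow> diagonalizable (br h) \<and> spectrum_op (br h) \<subseteq> {-1, 0, 1}"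

end

theory Submission
  imports Defs
begin

lemma la_bil: "lie_algebra br \<Longrightarrow> bilinear br"
  by (simp add: lie_algebra_def)

lemma la_lin: "lie_algebra br \<Longrightarrow> linear (br x)"
  using la_bil[of br] unfolding bilinear_def by auto

lemma la_anti:
  assumes "lie_algebra br" shows "br x y = - br y x"
proof -
  have b: "bilinear br" using assms la_bil by blast
  have z: "\<And>u. br u u = 0" using assms by (simp add: lie_algebra_def)
  have "0 = br (x+y) (x+y)" using z by simp
  also have "\<dots> = br x x + br x y + (br y x + br y y)"
    by (simp add: bilinear_ladd[OF b] bilinear_radd[OF b])
  finally have "br x y + br y x = 0" using z by (simp add: algebra_simps)
  thus ?thesis by (simp add: eq_neg_iff_add_eq_0)
qed

lemma la_der:
  assumes "lie_algebra br"
  shows "br h (br a b) = br (br h a) b + br a (br h b)"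
proof -
  have "br h (br a b) + br a (br b h) + br b (br h a) = 0"
    using assms by (simp add: lie_algebra_def)
  hence J: "br h (br a b) + (br a (br b h) + br b (br h a)) = 0" by (simp only: add.assoc)
  have 1: "br a (br b h) = - br a (br h b)"
    using la_anti[OF assms, of b h] la_lin[OF assms, of a] by (simp add: linear_neg)
  have 2: "br b (br h a) = - br (br h a) b" using la_anti[OF assms] by blast
  have "br h (br a b) = - (br a (br b h) + br b (br h a))" using J by (simp only: eq_neg_iff_add_eq_0)
  also have "\<dots> = br (br h a) b + br a (br h b)" unfolding 1 2 by simp
  finally show ?thesis .
qed

lemma ds_ideal:
  assumes la: "lie_algebra br" and I: "lie_ideal br I"
  shows "lie_ideal br (derived_series br I k)"
proof (induction k)
  case 0 thus ?case using I by simp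
next
  case (Suc k)
  let ?D = "derived_series br I k"
  let ?S = "{br a b | a b. a \<in> ?D \<and> b \<in> ?D}"
  have cl: "\<And>z y. y \<in> ?D \<Longrightarrow> br z y \<in> ?D" using Suc unfolding lie_ideal_def by blast
  have "br z y \<in> span ?S" if "y \<in> span ?S" for z y
  proof -
    have img: "br z ` ?S \<subseteq> span ?S"
    proof
      fix w assume "w \<in> br z ` ?S"
      then obtain a b where ab: "a \<in> ?D" "b \<in> ?D" "w = br z (br a b)" by blast
      have w: "w = br (br z a) b + br a (br z b)" using ab(3) la_der[OF la, of z a b] by simp
      have "br (br z a) b \<in> ?S" using ab cl by blast
      hence 1: "br (br z a) b \<in> span ?S" by (rule span_base)
      have "br a (br z b) \<in> ?S" using ab cl by blast
      hence 2: "br a (br z b) \<in> span ?S" by (rule span_base)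
      show "w \<in> span ?S" unfolding w by (rule span_add[OF 1 2])
    qed
    have "span (br z ` ?S) \<subseteq> span ?S" using span_mono[OF img] unfolding span_span .
    moreover have "br z y \<in> br z ` span ?S" using that by (rule imageI)
    moreover have "br z ` span ?S = span (br z ` ?S)" using span_linear_image[OF la_lin[OF la, of z], of ?S] by (rule sym)
    ultimately show ?thesis by blast
  qed
  thus ?case unfolding lie_ideal_def derived_series.simps using subspace_span by blast
qed

lemma key:
  assumes la: "lie_algebra br"
    and pC: "pointed C" and sC: "span C = UNIV" and iC: "\<forall>g\<in>Inn br. g ` C \<subseteq> C"
    and H3: "\<And>v. br h (br h (br h v)) = br h v"
    and Dk: "lie_ideal br D"
    and IH: "\<And>a b. a \<in> D \<Longrightarrow> b \<in> D \<Longrightarrow> br h (br a b) = 0"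
    and xD: "x \<in> D" and Hx: "br h x = x"
  shows "x = 0"
proof -
  have b: "bilinear br" using la la_bil by blast
  have lin: "\<And>u. linear (br u)" using la la_lin by blast
  note ladd = bilinear_ladd[OF b] and radd = bilinear_radd[OF b]
     and rmul = bilinear_rmul[OF b] and lmul = bilinear_lmul[OF b]
     and rsub = bilinear_rsub[OF b] and rzero = bilinear_rzero[OF b]
  have z2: "v = 0" if "br h v = 2 *\<^sub>R v" for v
  proof -
    have s2: "br h (br h v) = 4 *\<^sub>R v" using that rmul[of h 2 v] by simp
    have s3: "br h (br h (br h v)) = 8 *\<^sub>R v" using s2 rmul[of h 4 v] that by simp
    hence "(8::real) *\<^sub>R v = 2 *\<^sub>R v" using H3[of v] that by simp
    hence "(8::real) *\<^sub>R v - 2 *\<^sub>R v = 0" by simp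
    hence "(8 - 2::real) *\<^sub>R v = 0" by (simp only: scaleR_left_diff_distrib)
    thus ?thesis by simp
  qed
  have der: "\<And>a c. br h (br a c) = br (br h a) c + br a (br h c)" using la_der[OF la] by blast
  have sq: "br x (br x c) = 0" for c
  proof -
    define c1 where "c1 = (1/2) *\<^sub>R (br h (br h c) + br h c)"
    define cm where "cm = (1/2) *\<^sub>R (br h (br h c) - br h c)"
    define c0 where "c0 = c - br h (br h c)"
    have "c1 + cm = (1/2) *\<^sub>R ((br h (br h c) + br h c) + (br h (br h c) - br h c))"
      unfolding c1_def cm_def by (simp only: scaleR_add_right)
    also have "\<dots> = (1/2) *\<^sub>R (2 *\<^sub>R br h (br h c))" by (simp add: scaleR_2)
    also have "\<dots> = br h (br h c)" by simp
    finally have "c1 + cm = br h (br h c)" .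
    hence dec: "c = c1 + c0 + cm" unfolding c0_def by (simp add: algebra_simps)
    have Hc1: "br h c1 = c1" unfolding c1_def by (simp add: rmul radd H3 add.commute)
    have Hcm: "br h cm = - cm" unfolding cm_def by (simp add: rmul rsub H3 algebra_simps)
    have Hc0: "br h c0 = 0" unfolding c0_def by (simp add: rsub H3)
    have e1: "br x c1 = 0"
      by (rule z2) (simp add: der Hx Hc1 scaleR_2)
    have e0a: "br h (br x c0) = br x c0" by (simp add: der Hx Hc0 rzero)
    have e0: "br x (br x c0) = 0"
      by (rule z2) (simp only: der[of x "br x c0"] Hx e0a scaleR_2)
    define w where "w = br x cm"
    have Hw: "br h w = 0" unfolding w_def by (simp add: der Hx Hcm rmul[of _ "-1", simplified] bilinear_rneg[OF b])
    have wD: "w \<in> D" using Dk unfolding w_def lie_ideal_def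
      by (metis la_anti[OF la] xD subspace_neg)
    have em: "br x w = 0"
      using IH[OF xD wD] der[of x w] by (simp add: Hx Hw rzero)
    have "br x (br x c) = br x (br x c1) + br x (br x c0) + br x (br x cm)"
      using dec by (simp add: radd)
    thus ?thesis using e1 e0 em w_def by (simp add: rzero)
  qed
  have expf: "exp_ad br (t *\<^sub>R x) c = c + t *\<^sub>R br x c" for t c
  proof -
    let ?f = "br (t *\<^sub>R x)"
    let ?g = "\<lambda>n. (1 / fact n) *\<^sub>R ((?f ^^ n) c)"
    have ff: "?f (?f v) = 0" for v by (simp add: lmul rmul sq)
    have "?g n = 0" if "n \<notin> {..<2}" for n
    proof -
      have "n = Suc (Suc (n-2))" using that by auto
      hence "(?f ^^ n) c = ?f (?f ((?f ^^ (n-2)) c))" by (metis comp_apply funpow.simps(2))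
      thus ?thesis using ff by simp
    qed
    hence "suminf ?g = sum ?g {..<2}" by (intro suminf_finite) auto
    also have "\<dots> = c + t *\<^sub>R br x c" by (simp add: numeral_2_eq_2 lmul)
    finally show ?thesis unfolding exp_ad_def .
  qed
  have inn: "exp_ad br (t *\<^sub>R x) \<in> Inn br" for t
    using Inn.Inn_gen[OF Inn.Inn_id, of br "t *\<^sub>R x"] by simp
  have vC: "br x c = 0" if "c \<in> C" for c
  proof (rule ccontr)
    assume ne: "br x c \<noteq> 0"
    have "\<forall>t::real. c + t *\<^sub>R br x c \<in> C"
      using iC inn that expf by (metis image_subset_iff)
    thus False using pC ne unfolding pointed_def by blast
  qed
  have "br x h = 0" using linear_eq_0_on_span[OF lin[of x], of C h] vC sC by auto
  hence "br h x = 0" using la_anti[OF la, of h x] by simp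
  thus ?thesis using Hx by simp
qed

theorem proposition4p12:
  fixes br :: "'a::euclidean_space \<Rightarrow> 'a \<Rightarrow> 'a" and h :: 'a
  assumes "lie_algebra br"
    and "admissible br"
    and "\<not> reductive br"
    and "center br \<subseteq> derived_algebra br"
    and "euler_element br h"
  shows "\<forall>r\<in>radical br. br h r = 0"
proof
  note la = assms(1)
  have b: "bilinear br" using la la_bil by blast
  have lin: "\<And>u. linear (br u)" using la la_lin by blast
  obtain C where pC: "pointed C" and sC: "span C = UNIV" and iC: "\<forall>g\<in>Inn br. g ` C \<subseteq> C"
    using assms(2) unfolding admissible_def by blast
  have H3: "br h (br h (br h v)) = br h v" for v
  proof -
    have l3: "linear (\<lambda>v. br h (br h (br h v)) - br h v)"
    proof -
      have l2: "linear (\<lambda>v. br h (br h v))" using linear_compose[OF lin[of h] lin[of h]] by (simp add: o_def)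
      have "linear (\<lambda>v. br h (br h (br h v)))" using linear_compose[OF lin[of h] l2] by (simp add: o_def)
      thus ?thesis using lin[of h] by (rule linear_compose_sub[unfolded o_def])
    qed
    have "br h (br h (br h u)) - br h u = 0" if uu: "u \<in> {v. \<exists>c::real. br h v = c *\<^sub>R v}" for u
    proof -
      obtain c where c: "br h u = c *\<^sub>R u" using uu by blast
      show ?thesis
      proof (cases "u = 0")
        case True thus ?thesis by (simp add: bilinear_rzero[OF b])
      next
        case False
        hence "c \<in> spectrum_op (br h)" using c unfolding spectrum_op_def by blast
        hence "c \<in> {-1,0,1}" using assms(5) unfolding euler_element_def by blast
        hence "c*c*c = c" by auto
        thus ?thesis using c by (simp add: bilinear_rmul[OF b])
      qed
    qed
    moreover have "v \<in> span {v. \<exists>c::real. br h v = c *\<^sub>R v}"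
      using assms(5) unfolding euler_element_def diagonalizable_def by simp
    ultimately have "br h (br h (br h v)) - br h v = 0"
      using linear_eq_0_on_span[OF l3] by blast
    thus ?thesis by simp
  qed
  have Hm3: "br (-h) (br (-h) (br (-h) v)) = br (-h) v" for v
    using H3 by (simp add: bilinear_lneg[OF b] linear_neg[OF lin])
  fix r assume "r \<in> radical br"
  then obtain I where I: "lie_ideal br I" "solvable br I" "r \<in> I"
    unfolding radical_def by blast
  obtain n where n: "derived_series br I n = {0}" using I(2) unfolding solvable_def by blast
  have main: "\<forall>y \<in> derived_series br I (n - j). br h y = 0" for j
  proof (induction j)
    case 0 thus ?case using n by (simp add: bilinear_rzero[OF b])
  next
    case (Suc j)
    show ?case
    proof (cases "j < n")
      case False
      hence "n - Suc j = n - j" by simp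
      thus ?thesis using Suc by simp
    next
      case True
      define k where "k = n - Suc j"
      have kj: "Suc k = n - j" using True k_def by simp
      let ?D = "derived_series br I k"
      have Dk: "lie_ideal br ?D" using ds_ideal[OF la I(1)] by blast
      have IH: "\<And>a c. a \<in> ?D \<Longrightarrow> c \<in> ?D \<Longrightarrow> br h (br a c) = 0"
      proof -
        fix a c assume "a \<in> ?D" "c \<in> ?D"
        hence "br a c \<in> derived_series br I (Suc k)" by (auto intro: span_base)
        thus "br h (br a c) = 0" using Suc.IH kj by simp
      qed
      have IHm: "\<And>a c. a \<in> ?D \<Longrightarrow> c \<in> ?D \<Longrightarrow> br (-h) (br a c) = 0"
        using IH by (simp add: bilinear_lneg[OF b])
      have "br h y = 0" if y: "y \<in> ?D" for y
      proof -
        have sub: "subspace ?D" using Dk unfolding lie_ideal_def by blast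
        have cl: "\<And>z u. u \<in> ?D \<Longrightarrow> br z u \<in> ?D" using Dk unfolding lie_ideal_def by blast
        define x1 where "x1 = (1/2) *\<^sub>R (br h (br h y) + br h y)"
        define xm where "xm = (1/2) *\<^sub>R (br h (br h y) - br h y)"
        have x1D: "x1 \<in> ?D" unfolding x1_def using y cl sub
          by (intro subspace_scale[OF sub] subspace_add[OF sub]) auto
        have xmD: "xm \<in> ?D" unfolding xm_def using y cl sub
          by (intro subspace_scale[OF sub] subspace_diff[OF sub]) auto
        have H1: "br h x1 = x1" unfolding x1_def
          by (simp add: bilinear_rmul[OF b] bilinear_radd[OF b] H3 add.commute)
        have Hm: "br (-h) xm = xm" unfolding xm_def
          by (simp add: bilinear_lneg[OF b] bilinear_rmul[OF b] bilinear_rsub[OF b] H3 algebra_simps)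
        have "x1 = 0" by (rule key[OF la pC sC iC H3 Dk IH x1D H1])
        moreover have "xm = 0" by (rule key[OF la pC sC iC Hm3 Dk IHm xmD Hm])
        moreover have "br h y = x1 - xm"
        proof -
          have "x1 - xm = (1/2) *\<^sub>R ((br h (br h y) + br h y) - (br h (br h y) - br h y))"
            unfolding x1_def xm_def by (simp only: scaleR_diff_right)
          also have "\<dots> = (1/2) *\<^sub>R (2 *\<^sub>R br h y)" by (simp add: scaleR_2)
          also have "\<dots> = br h y" by simp
          finally show ?thesis by simp
        qed
        ultimately show ?thesis by simp
      qed
      thus ?thesis using k_def by simp
    qed
  qed
  from main[of n] show "br h r = 0" using I(3) by simp
qed

end
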